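(* Let $G$ be a bipartite graph with $p(G)=|V(G)|\ge 3$ vertices and $q(G)=|E(G)|\ge 2p(G)-2$ edges. Then $G$ is not bipartite Ramsey size linear.
   Context: For bipartite graphs $G_1,G_2$, the bipartite Ramsey number $\operatorname{br}(G_1,G_2)$ is the smallest integer $N$ such that every red/blue coloring of the edges of $K_{N,N}$ contains a red copy of $G_1$ or a blue copy of $G_2$. A bipartite graph $H$ is called bipartite Ramsey size linear if there exists a constant $C$ such that for every bipartite graph $G'$ with $m$ edges and no isolated vertices, $\operatorname{br}(H,G')\le C\cdot m$. *)

theory Defs
  imports Complex_Main
begin

definition sgraph :: "'a set \<Rightarrow> 'a set set \<Rightarrow> bool" where
  "sgraph V E \<longleftrightarrow> finite V \<and> (\<forall>e\<in>E. e \<subseteq> V \<and> card e = 2)"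

definition bipartite_graph :: "'a set \<Rightarrow> 'a set set \<Rightarrow> bool" where
  "bipartite_graph V E \<longleftrightarrow> sgraph V E \<and> (\<exists>A. A \<subseteq> V \<and> (\<forall>e\<in>E. card (e \<inter> A) = 1))"

definition no_isolated :: "'a set \<Rightarrow> 'a set set \<Rightarrow> bool" where
  "no_isolated V E \<longleftrightarrow> (\<forall>v\<in>V. \<exists>e\<in>E. v \<in> e)"

text \<open>K_{N,N} has vertices Inl i, Inr j (i, j < N) and edges {Inl i, Inr j}.
  A red/blue colouring is c :: nat => nat => bool, c i j = True meaning the edge
  {Inl i, Inr j} is red.\<close>
definition KNN_verts :: "nat \<Rightarrow> (nat + nat) set" where
  "KNN_verts N = Inl ` {..<N} \<union> Inr ` {..<N}"

definition colour_copy ::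
  "nat \<Rightarrow> (nat \<Rightarrow> nat \<Rightarrow> bool) \<Rightarrow> bool \<Rightarrow> 'a set \<Rightarrow> 'a set set \<Rightarrow> bool" where
  "colour_copy N c col V E \<longleftrightarrow>
     (\<exists>f. inj_on f V \<and> f ` V \<subseteq> KNN_verts N \<and>
          (\<forall>e\<in>E. \<exists>i<N. \<exists>j<N. f ` e = {Inl i, Inr j} \<and> c i j = col))"

definition bip_arrows ::
  "nat \<Rightarrow> 'a set \<Rightarrow> 'a set set \<Rightarrow> 'b set \<Rightarrow> 'b set set \<Rightarrow> bool" where
  "bip_arrows N V1 E1 V2 E2 \<longleftrightarrow>
     (\<forall>c. colour_copy N c True V1 E1 \<or> colour_copy N c False V2 E2)"

definition br :: "'a set \<Rightarrow> 'a set set \<Rightarrow> 'b set \<Rightarrow> 'b set set \<Rightarrow> nat" where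
  "br V1 E1 V2 E2 = (LEAST N. bip_arrows N V1 E1 V2 E2)"

text \<open>Bipartite Ramsey size linear; the graphs G' range over graphs on vertex type nat
  (every finite graph is isomorphic to one of these).\<close>
definition bip_ramsey_size_linear :: "'a set \<Rightarrow> 'a set set \<Rightarrow> bool" where
  "bip_ramsey_size_linear V E \<longleftrightarrow>
     (\<exists>C::real. \<forall>(V'::nat set) E'. bipartite_graph V' E' \<and> no_isolated V' E' \<longrightarrow>
        real (br V E V' E') \<le> C * real (card E'))"

end

theory Submission
  imports Defs "HOL-Probability.Probability"
begin


lemma fact_ge_pow3: "(real s / 3) ^ s \<le> fact s"
proof -
  have sm: "(\<lambda>n. real s ^ n /\<^sub>R fact n) sums exp (real s)" by (rule exp_converges)
  have "sum (\<lambda>n. real s ^ n /\<^sub>R fact n) {s} \<le> suminf (\<lambda>n. real s ^ n /\<^sub>R fact n)"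
    by (rule sum_le_suminf) (use sm in \<open>auto simp: sums_iff\<close>)
  hence "real s ^ s / fact s \<le> exp (real s)" using sm by (simp add: sums_iff divide_inverse mult.commute)
  also have "exp (real s) = exp 1 ^ s" by (simp add: exp_of_nat_mult[symmetric])
  also have "\<dots> \<le> 3 ^ s" by (rule power_mono[OF exp_le]) simp
  finally have "real s ^ s \<le> 3 ^ s * fact s" by (simp add: divide_le_eq mult.commute)
  thus ?thesis by (simp add: power_divide divide_le_eq mult.commute)
qed

lemma pow_le_two_pow:
  fixes A c k :: nat
  assumes "A \<ge> 1" "k \<ge> A * (c+1)^(c+1)"
  shows "A * k ^ c \<le> 2 ^ k"
proof -
  have c1: "c + 1 \<le> k"
  proof -
    have "c + 1 \<le> (c+1)^(c+1)" by (rule self_le_power) auto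
    also have "\<dots> \<le> A * (c+1)^(c+1)" using assms(1) by simp
    finally show ?thesis using assms(2) by linarith
  qed
  have "(real k / real (c+1)) ^ (c+1) \<le> real (k choose (c+1))"
    by (rule binomial_ge_n_over_k_pow_k[OF c1])
  also have "\<dots> \<le> 2 ^ k" using binomial_le_pow2[of k "c+1"]
    by (metis of_nat_le_iff of_nat_numeral of_nat_power)
  finally have 1: "(real k / real (c+1)) ^ (c+1) \<le> 2 ^ k" .
  have "real A * real ((c+1)^(c+1)) \<le> real k" using assms(2) by (simp only: of_nat_mult[symmetric] of_nat_le_iff)
  hence "real k ^ c * (real A * real ((c+1)^(c+1))) \<le> real k ^ c * real k"
    by (rule mult_left_mono) simp
  hence "real A * real k ^ c * real ((c+1)^(c+1)) \<le> real k ^ c * real k"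
    by (simp add: mult_ac)
  moreover have "(real k / real (c+1)) ^ (c+1) = real k ^ c * real k / real ((c+1)^(c+1))"
    by (simp only: power_divide of_nat_power) (simp add: power_add)
  moreover have "real ((c+1)^(c+1)) > 0" by (subst of_nat_0_less_iff) simp
  ultimately have "real A * real k ^ c \<le> (real k / real (c+1)) ^ (c+1)"
    by (metis pos_le_divide_eq)
  with 1 have "real A * real k ^ c \<le> 2 ^ k" by linarith
  thus ?thesis by (metis of_nat_le_iff of_nat_mult of_nat_numeral of_nat_power)
qed

lemma pigeon:
  assumes "finite Y" "g ` D \<subseteq> Y" "finite D" "card D > card Y * m"
  shows "\<exists>y\<in>Y. card {x\<in>D. g x = y} > m"
proof (rule ccontr)
  assume "\<not> ?thesis"
  hence le: "\<forall>y\<in>Y. card {x\<in>D. g x = y} \<le> m" by auto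
  have "D = (\<Union>y\<in>Y. {x\<in>D. g x = y})" using assms(2) by auto
  hence "card D \<le> (\<Sum>y\<in>Y. card {x\<in>D. g x = y})" by (metis card_UN_le assms(1))
  also have "\<dots> \<le> (\<Sum>y\<in>Y. m)" by (rule sum_mono) (use le in auto)
  also have "\<dots> = card Y * m" by simp
  finally show False using assms(4) by simp
qed


lemma bip_ramsey_mono:
  "\<exists>N. \<forall>c::nat\<Rightarrow>nat\<Rightarrow>bool. \<exists>col A B. A \<subseteq> {..<N} \<and> B \<subseteq> {..<N} \<and> card A = s \<and> card B = s \<and>
      (\<forall>a\<in>A. \<forall>b\<in>B. c a b = col)"
proof -
  define X where "X = {..<(2 * s)}"
  define Y where "Y = (UNIV :: bool set) \<times> Pow X"
  define N where "N = 2 * s + card Y * s + 1"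
  have finY: "finite Y" unfolding Y_def X_def by simp
  have "\<forall>c::nat\<Rightarrow>nat\<Rightarrow>bool. \<exists>col A B. A \<subseteq> {..<N} \<and> B \<subseteq> {..<N} \<and> card A = s \<and> card B = s \<and>
      (\<forall>a\<in>A. \<forall>b\<in>B. c a b = col)"
  proof
    fix c :: "nat\<Rightarrow>nat\<Rightarrow>bool"
    define Q where "Q = (\<lambda>j (col, S). S \<subseteq> X \<and> card S = s \<and> (\<forall>i\<in>S. c i j = col))"
    have ex: "\<exists>z. Q j z" for j
    proof -
      define R where "R = {i\<in>X. c i j}"
      have fR: "finite R" "R \<subseteq> X" unfolding R_def X_def by auto
      show ?thesis
      proof (cases "card R \<ge> s")
        case True
        then obtain S where "S \<subseteq> R" "card S = s" using obtain_subset_with_card_n by metis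
        thus ?thesis unfolding Q_def R_def by (intro exI[of _ "(True, S)"]) auto
      next
        case False
        have "card (X - R) = card X - card R" using fR by (simp add: card_Diff_subset X_def)
        hence "card (X - R) \<ge> s" using False by (simp add: X_def)
        then obtain S where "S \<subseteq> X - R" "card S = s" using obtain_subset_with_card_n by metis
        thus ?thesis unfolding Q_def R_def by (intro exI[of _ "(False, S)"]) auto
      qed
    qed
    define g where "g = (\<lambda>j. SOME z. Q j z)"
    have gQ: "Q j (g j)" for j unfolding g_def using ex[of j] by (rule someI_ex)
    have "g j \<in> Y" for j using gQ[of j] by (cases "g j") (simp add: Q_def Y_def)
    hence gY: "g ` {..<N} \<subseteq> Y" by auto
    have "card Y * (s - 1) \<le> card Y * s" by (intro mult_le_mono2) simp
    hence "card {..<N} > card Y * (s - 1)" unfolding N_def card_lessThan by linarith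
    from pigeon[OF finY gY _ this] obtain y where y: "y \<in> Y" "card {j\<in>{..<N}. g j = y} > s - 1" by auto
    obtain col S where yy: "y = (col, S)" by (cases y)
    have "s \<le> card {j\<in>{..<N}. g j = y}" using y(2) by linarith
    then obtain B where B: "B \<subseteq> {j\<in>{..<N}. g j = y}" "card B = s"
      by (meson obtain_subset_with_card_n)
    have QS: "Q b (col, S)" if "b \<in> B" for b using gQ[of b] B(1) that yy by auto
    show "\<exists>col A B. A \<subseteq> {..<N} \<and> B \<subseteq> {..<N} \<and> card A = s \<and> card B = s \<and>
      (\<forall>a\<in>A. \<forall>b\<in>B. c a b = col)"
    proof (cases "s = 0")
      case True thus ?thesis by (intro exI[of _ True] exI[of _ "{}"]) auto
    next
      case False
      then obtain b0 where "b0 \<in> B" using B(2) by fastforce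
      hence "S \<subseteq> X" "card S = s" using QS[of b0] unfolding Q_def by auto
      hence "S \<subseteq> {..<N}" unfolding X_def N_def by auto
      moreover have "\<forall>a\<in>S. \<forall>b\<in>B. c a b = col" using QS unfolding Q_def by auto
      ultimately show ?thesis using B \<open>card S = s\<close>
        by (intro exI[of _ col] exI[of _ S] exI[of _ B]) auto
    qed
  qed
  thus ?thesis by blast
qed


lemma card_KNN: "card (KNN_verts M) = 2 * M"
proof -
  have "card (Inl ` {..<M} \<union> Inr ` {..<M} :: (nat+nat) set) = card (Inl ` {..<M} :: (nat+nat) set) + card (Inr ` {..<M} :: (nat+nat) set)"
    by (rule card_Un_disjoint) auto
  also have "\<dots> = 2 * M" by (simp add: card_image)
  finally show ?thesis unfolding KNN_verts_def .
qed

lemma doubleton_sum_eq: "({Inl i, Inr j} :: ('x + 'y) set) = {Inl i', Inr j'} \<longleftrightarrow> i = i' \<and> j = j'"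
  by (auto simp: doubleton_eq_iff)

locale Hgraph =
  fixes V :: "'a set" and E :: "'a set set"
  assumes bip: "bipartite_graph V E" and p3: "card V \<ge> 3" and qbig: "card E \<ge> 2 * card V - 2"
begin

lemma finV: "finite V" using bip unfolding bipartite_graph_def sgraph_def by auto
lemma edge_sub: "e \<in> E \<Longrightarrow> e \<subseteq> V" using bip unfolding bipartite_graph_def sgraph_def by auto
lemma edge_card: "e \<in> E \<Longrightarrow> card e = 2" using bip unfolding bipartite_graph_def sgraph_def by auto
lemma finE: "finite E" by (rule finite_subset[of E "Pow V"]) (use edge_sub finV in auto)
lemma qpos: "card E > 0" using qbig p3 by linarith
lemma Ene: "E \<noteq> {}" using qpos by auto

definition cedges :: "('a \<Rightarrow> nat + nat) \<Rightarrow> (nat \<times> nat) set" where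
  "cedges f = {(i,j). \<exists>e\<in>E. f ` e = {Inl i, Inr j}}"

definition emb :: "nat \<Rightarrow> ('a \<Rightarrow> nat + nat) \<Rightarrow> bool" where
  "emb M f \<longleftrightarrow> inj_on f V \<and> f ` V \<subseteq> KNN_verts M \<and> (\<forall>e\<in>E. \<exists>i<M. \<exists>j<M. f ` e = {Inl i, Inr j})"

definition Cop :: "nat \<Rightarrow> (nat \<times> nat) set set" where
  "Cop M = cedges ` {f. emb M f}"

lemma cedges_sub: assumes "emb M f" shows "cedges f \<subseteq> {..<M} \<times> {..<M}"
proof
  fix x assume "x \<in> cedges f"
  then obtain i j e where e: "x = (i,j)" "e \<in> E" "f ` e = {Inl i, Inr j}" unfolding cedges_def by auto
  hence "Inl i \<in> f ` V" "Inr j \<in> f ` V" using edge_sub[OF e(2)] by auto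
  hence "Inl i \<in> KNN_verts M" "Inr j \<in> KNN_verts M" using assms unfolding emb_def by auto
  thus "x \<in> {..<M} \<times> {..<M}" unfolding KNN_verts_def e(1) by auto
qed

lemma Cop_sub: "X \<in> Cop M \<Longrightarrow> X \<subseteq> {..<M} \<times> {..<M}"
  unfolding Cop_def using cedges_sub by auto

lemma finite_Cop: "finite (Cop M)"
  by (rule finite_subset[of _ "Pow ({..<M} \<times> {..<M})"]) (use Cop_sub in auto)

lemma card_cedges:
  assumes "emb M f" shows "card (cedges f) = card E"
proof -
  define \<phi> where "\<phi> = (\<lambda>e. SOME ij. f ` e = {Inl (fst ij), Inr (snd ij)})"
  have E3: "\<forall>e\<in>E. \<exists>i<M. \<exists>j<M. f ` e = {Inl i, Inr j}" using assms unfolding emb_def by (elim conjE)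
  have phi: "f ` e = {Inl (fst (\<phi> e)), Inr (snd (\<phi> e))}" if eE: "e \<in> E" for e
  proof -
    obtain i j where "f ` e = {Inl i, Inr j}" using E3 eE by blast
    hence "\<exists>ij. f ` e = {Inl (fst ij), Inr (snd ij)}" by (rule_tac exI[of _ "(i,j)"]) simp
    thus ?thesis unfolding \<phi>_def by (rule someI_ex)
  qed
  have "cedges f = \<phi> ` E"
  proof
    show "cedges f \<subseteq> \<phi> ` E"
    proof
      fix x assume "x \<in> cedges f"
      then obtain i j e where x: "x = (i,j)" "e \<in> E" "f ` e = {Inl i, Inr j}" unfolding cedges_def by auto
      have "{Inl i, Inr j} = {Inl (fst (\<phi> e)), Inr (snd (\<phi> e))}" using phi[OF x(2)] x(3) by simp
      hence "i = fst (\<phi> e)" "j = snd (\<phi> e)" unfolding doubleton_sum_eq by auto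
      hence "\<phi> e = x" using x(1) by simp
      thus "x \<in> \<phi> ` E" using x(2) by blast
    qed
    show "\<phi> ` E \<subseteq> cedges f"
    proof
      fix x assume "x \<in> \<phi> ` E"
      then obtain e where e: "e \<in> E" "x = \<phi> e" by blast
      obtain a b where ab: "\<phi> e = (a,b)" by (cases "\<phi> e")
      have "f ` e = {Inl a, Inr b}" using phi[OF e(1)] ab by simp
      hence "(a,b) \<in> cedges f" unfolding cedges_def using e(1) by simp (rule bexI)
      thus "x \<in> cedges f" using e(2) ab by simp
    qed
  qed
  moreover have "inj_on \<phi> E"
  proof
    fix e1 e2 assume e: "e1 \<in> E" "e2 \<in> E" "\<phi> e1 = \<phi> e2"
    hence "f ` e1 = f ` e2" using phi[OF e(1)] phi[OF e(2)] by simp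
    moreover have "inj_on f V" using assms unfolding emb_def by (elim conjE)
    moreover have "e1 \<subseteq> V" "e2 \<subseteq> V" using e edge_sub by auto
    ultimately show "e1 = e2" using inj_on_image_eq_iff by metis
  qed
  ultimately show ?thesis by (simp add: card_image)
qed

lemma cedges_ne: "emb M f \<Longrightarrow> cedges f \<noteq> {}"
  using card_cedges qpos by fastforce

lemma card_Cop: "X \<in> Cop M \<Longrightarrow> card X = card E"
  unfolding Cop_def using card_cedges by auto

lemma colour_copy_emb:
  assumes "colour_copy M c True V E"
  shows "\<exists>f. emb M f \<and> (\<forall>(i,j)\<in>cedges f. c i j)"
proof -
  obtain f where f: "inj_on f V" "f ` V \<subseteq> KNN_verts M"
     "\<forall>e\<in>E. \<exists>i<M. \<exists>j<M. f ` e = {Inl i, Inr j} \<and> c i j = True"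
    using assms unfolding colour_copy_def by blast
  have "emb M f" unfolding emb_def using f by blast
  moreover have "\<forall>(i,j)\<in>cedges f. c i j"
  proof (clarify)
    fix i j assume "(i,j) \<in> cedges f"
    then obtain e where e: "e \<in> E" "f ` e = {Inl i, Inr j}" unfolding cedges_def by auto
    obtain i' j' where "f ` e = {Inl i', Inr j'}" "c i' j'" using f(3) e(1) by blast
    thus "c i j" using e by (auto simp: doubleton_sum_eq)
  qed
  ultimately show ?thesis by blast
qed

end

context Hgraph begin

lemma card_Pe:
  assumes "e \<in> E"
  shows "card (PiE V (\<lambda>w. if w \<in> e then {Inl i, Inr j} else KNN_verts M)) = 4 * (2*M)^(card V - 2)"
proof -
  have cVe: "card (V - e) = card V - 2" using edge_sub[OF assms] edge_card[OF assms]
    by (simp add: card_Diff_subset finite_subset[OF _ finV])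
  have "card (PiE V (\<lambda>w. if w \<in> e then {Inl i, Inr j} else KNN_verts M)) =
        (\<Prod>w\<in>V. card (if w \<in> e then {Inl i, Inr j} else KNN_verts M))"
    by (rule card_PiE[OF finV])
  also have "\<dots> = (\<Prod>w\<in>V. if w \<in> e then 2 else 2 * M)"
    by (rule prod.cong) (auto simp: card_KNN)
  also have "\<dots> = (\<Prod>w\<in>V \<inter> {w. w \<in> e}. 2) * (\<Prod>w\<in>V \<inter> - {w. w \<in> e}. 2 * M)"
    by (rule prod.If_cases[OF finV])
  also have "V \<inter> {w. w \<in> e} = e" using edge_sub[OF assms] by auto
  also have "V \<inter> - {w. w \<in> e} = V - e" by auto
  finally show ?thesis using edge_card[OF assms] cVe by simp
qed

lemma cedges_restrict: "cedges (restrict f V) = cedges f"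
proof -
  have "restrict f V ` e = f ` e" if "e \<in> E" for e using edge_sub[OF that] by auto
  thus ?thesis unfolding cedges_def by (metis (no_types, lifting))
qed

lemma count_CopB:
  assumes finB: "finite B"
  shows "card {X\<in>Cop M. X \<inter> B \<noteq> {}} \<le> card B * card E * (4 * (2*M)^(card V - 2))"
proof -
  define Pe where "Pe = (\<lambda>e i j. PiE V (\<lambda>w. if w \<in> e then {Inl i, Inr j} else KNN_verts M))"
  have sub: "{X\<in>Cop M. X \<inter> B \<noteq> {}} \<subseteq> (\<Union>ij\<in>B. \<Union>e\<in>E. cedges ` Pe e (fst ij) (snd ij))"
  proof
    fix X assume X: "X \<in> {X\<in>Cop M. X \<inter> B \<noteq> {}}"
    then obtain f where f: "emb M f" "X = cedges f" unfolding Cop_def by auto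
    from X obtain i j where ij: "(i,j) \<in> X" "(i,j) \<in> B" by auto
    then obtain e where e: "e \<in> E" "f ` e = {Inl i, Inr j}" using f(2) unfolding cedges_def by auto
    have "restrict f V \<in> Pe e i j"
    proof -
      have "f w \<in> (if w \<in> e then {Inl i, Inr j} else KNN_verts M)" if "w \<in> V" for w
      proof (cases "w \<in> e")
        case True thus ?thesis using e(2) by auto
      next
        case False thus ?thesis using f(1) that unfolding emb_def by auto
      qed
      thus ?thesis unfolding Pe_def by auto
    qed
    hence "X \<in> cedges ` Pe e i j" using f(2) cedges_restrict by auto
    thus "X \<in> (\<Union>ij\<in>B. \<Union>e\<in>E. cedges ` Pe e (fst ij) (snd ij))" using ij(2) e(1) by force
  qed
  have "card {X\<in>Cop M. X \<inter> B \<noteq> {}} \<le> card (\<Union>ij\<in>B. \<Union>e\<in>E. cedges ` Pe e (fst ij) (snd ij))"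
    by (rule card_mono[OF _ sub]) (auto simp: Pe_def finV finE finB KNN_verts_def intro!: finite_PiE finite_imageI)
  also have "\<dots> \<le> (\<Sum>ij\<in>B. card (\<Union>e\<in>E. cedges ` Pe e (fst ij) (snd ij)))"
    by (rule card_UN_le[OF finB])
  also have "\<dots> \<le> (\<Sum>ij\<in>B. \<Sum>e\<in>E. card (cedges ` Pe e (fst ij) (snd ij)))"
    by (rule sum_mono, rule card_UN_le[OF finE])
  also have "\<dots> \<le> (\<Sum>ij\<in>B. \<Sum>e\<in>E. 4 * (2*M)^(card V - 2))"
  proof (rule sum_mono, rule sum_mono)
    fix ij e assume "e \<in> E"
    have "card (cedges ` Pe e (fst ij) (snd ij)) \<le> card (Pe e (fst ij) (snd ij))" by (rule card_image_le) (simp add: Pe_def finV finite_PiE KNN_verts_def)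
    also have "\<dots> = 4 * (2*M)^(card V - 2)" unfolding Pe_def by (rule card_Pe[OF \<open>e \<in> E\<close>])
    finally show "card (cedges ` Pe e (fst ij) (snd ij)) \<le> 4 * (2*M)^(card V - 2)" .
  qed
  also have "\<dots> = card B * card E * (4 * (2*M)^(card V - 2))" by simp
  finally show ?thesis .
qed

end

context Hgraph begin

lemma alteration:
  fixes col :: "nat \<times> nat \<Rightarrow> bool"
  assumes good: "\<And>S T. S \<subseteq> {..<M} \<Longrightarrow> T \<subseteq> {..<M} \<Longrightarrow> card S = t \<Longrightarrow> card T = t \<Longrightarrow>
     card E * s \<le> card {e \<in> S \<times> T. col e} \<and>
     \<not>(\<exists>F. F \<subseteq> {X\<in>Cop M. X \<inter> (S \<times> T) \<noteq> {}} \<and> card F = s \<and> disjoint F \<and> (\<forall>X\<in>F. \<forall>e\<in>X. col e))"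
  shows "\<exists>c. \<not> colour_copy M c True V E \<and>
     (\<forall>S T. S \<subseteq> {..<M} \<longrightarrow> T \<subseteq> {..<M} \<longrightarrow> card S = t \<longrightarrow> card T = t \<longrightarrow> (\<exists>a\<in>S. \<exists>b\<in>T. c a b))"
proof -
  define RC where "RC = {X\<in>Cop M. \<forall>e\<in>X. col e}"
  have finRC: "finite RC" unfolding RC_def using finite_Cop by simp
  define PF where "PF = {F. F \<subseteq> RC \<and> disjoint F}"
  have "\<exists>n. (\<exists>F\<in>PF. card F = n) \<and> (\<forall>y. (\<exists>F\<in>PF. card F = y) \<longrightarrow> y \<le> n)"
  proof (rule Nat.ex_has_greatest_nat[of _ 0 "card RC"])
    show "\<exists>F\<in>PF. card F = 0" unfolding PF_def by (intro bexI[of _ "{}"]) auto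
    show "\<forall>y. (\<exists>F\<in>PF. card F = y) \<longrightarrow> y \<le> card RC"
      unfolding PF_def using card_mono[OF finRC] by auto
  qed
  then obtain F where F: "F \<in> PF" and Fmax: "\<And>F'. F' \<in> PF \<Longrightarrow> card F' \<le> card F" by blast
  have FRC: "F \<subseteq> RC" and Fdisj: "disjoint F" using F unfolding PF_def by auto
  have finF: "finite F" using finite_subset[OF FRC finRC] .
  define c where "c = (\<lambda>a b. col (a,b) \<and> (a,b) \<notin> \<Union>F)"
  have nored: "\<not> colour_copy M c True V E"
  proof
    assume "colour_copy M c True V E"
    then obtain f where f: "emb M f" "\<forall>(i,j)\<in>cedges f. c i j" using colour_copy_emb by blast
    define X where "X = cedges f"
    have Xred: "\<forall>e\<in>X. col e \<and> e \<notin> \<Union>F" using f(2) unfolding X_def c_def by auto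
    have XRC: "X \<in> RC" unfolding RC_def Cop_def X_def using f(1) Xred[unfolded X_def] by auto
    have Xne: "X \<noteq> {}" unfolding X_def using cedges_ne[OF f(1)] .
    have XF: "X \<notin> F"
    proof
      assume "X \<in> F"
      obtain e where "e \<in> X" using Xne by auto
      thus False using Xred \<open>X \<in> F\<close> by auto
    qed
    have "\<forall>Y. Y \<in> F \<and> Y \<noteq> X \<longrightarrow> disjnt X Y \<and> disjnt Y X" using Xred by (auto simp: disjnt_def)
    hence "disjoint (insert X F)" unfolding pairwise_insert using Fdisj by blast
    hence "insert X F \<in> PF" unfolding PF_def using XRC FRC by auto
    hence "card (insert X F) \<le> card F" by (rule Fmax)
    thus False using XF finF by simp
  qed
  have nobox: "\<exists>a\<in>S. \<exists>b\<in>T. c a b"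
    if ST: "S \<subseteq> {..<M}" "T \<subseteq> {..<M}" "card S = t" "card T = t" for S T
  proof (rule ccontr)
    assume "\<not> ?thesis"
    hence blue: "\<And>a b. a \<in> S \<Longrightarrow> b \<in> T \<Longrightarrow> \<not> c a b" by blast
    define B where "B = S \<times> T"
    define FB where "FB = {X\<in>F. X \<inter> B \<noteq> {}}"
    have finFB: "finite FB" unfolding FB_def using finF by simp
    have "{e \<in> B. col e} \<subseteq> (\<Union>X\<in>FB. X \<inter> B)"
    proof
      fix e assume e: "e \<in> {e \<in> B. col e}"
      obtain a b where ab: "e = (a,b)" by (cases e)
      have "a \<in> S" "b \<in> T" using e ab unfolding B_def by auto
      hence "\<not> c a b" by (rule blue)
      hence "e \<in> \<Union>F" using e ab unfolding c_def by auto
      then obtain X where "X \<in> F" "e \<in> X" by auto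
      thus "e \<in> (\<Union>X\<in>FB. X \<inter> B)" using e unfolding FB_def by auto
    qed
    moreover have finB: "finite B" unfolding B_def
      using finite_subset[OF ST(1)] finite_subset[OF ST(2)] by auto
    moreover have "(\<Union>X\<in>FB. X \<inter> B) \<subseteq> B" by auto
    ultimately have "card {e \<in> B. col e} \<le> card (\<Union>X\<in>FB. X \<inter> B)"
      by (meson card_mono finite_subset)
    also have "\<dots> \<le> (\<Sum>X\<in>FB. card (X \<inter> B))" by (rule card_UN_le[OF finFB])
    also have "\<dots> \<le> (\<Sum>X\<in>FB. card E)"
    proof (rule sum_mono)
      fix X assume "X \<in> FB"
      hence XC: "X \<in> Cop M" using FRC unfolding FB_def RC_def by auto
      have "finite X" using Cop_sub[OF XC] finite_subset by blast
      hence "card (X \<inter> B) \<le> card X" by (simp add: card_mono)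
      thus "card (X \<inter> B) \<le> card E" using card_Cop[OF XC] by simp
    qed
    also have "\<dots> = card FB * card E" by simp
    finally have "card E * s \<le> card FB * card E" using good[OF ST] unfolding B_def by linarith
    hence "s \<le> card FB" using qpos by (simp add: mult.commute)
    then obtain F' where F': "F' \<subseteq> FB" "card F' = s" by (meson obtain_subset_with_card_n)
    have "F' \<subseteq> {X\<in>Cop M. X \<inter> (S \<times> T) \<noteq> {}}" using F'(1) FRC unfolding FB_def RC_def B_def by auto
    moreover have "disjoint F'" by (rule pairwise_subset[OF Fdisj]) (use F'(1) in \<open>auto simp: FB_def\<close>)
    moreover have "\<forall>X\<in>F'. \<forall>e\<in>X. col e" using F'(1) FRC unfolding FB_def RC_def by auto
    ultimately show False using good[OF ST] F'(2) by blast
  qed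
  show ?thesis using nored nobox by blast
qed

end


definition Omega :: "nat \<Rightarrow> real \<Rightarrow> (nat \<times> nat \<Rightarrow> bool) pmf" where
  "Omega M \<rho> = Pi_pmf ({..<M} \<times> {..<M}) False (\<lambda>_. bernoulli_pmf \<rho>)"

lemma prob_allcol:
  assumes "S \<subseteq> {..<M} \<times> {..<M}" "0 \<le> \<rho>" "\<rho> \<le> 1"
  shows "measure_pmf.prob (Omega M \<rho>) {col. \<forall>e\<in>S. col e = b} = (if b then \<rho> else 1 - \<rho>) ^ card S"
proof -
  define I where "I = {..<M} \<times> {..<M}"
  have finI: "finite I" unfolding I_def by simp
  have eq: "{col. \<forall>e\<in>S. col e = b} = Pi I (\<lambda>e. if e \<in> S then {b} else UNIV)"
    using assms(1) unfolding I_def by (auto simp: Pi_def)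
  have "measure_pmf.prob (Omega M \<rho>) {col. \<forall>e\<in>S. col e = b} =
        (\<Prod>e\<in>I. measure_pmf.prob (bernoulli_pmf \<rho>) (if e \<in> S then {b} else UNIV))"
    unfolding eq Omega_def I_def by (rule measure_Pi_pmf_Pi) simp
  also have "\<dots> = (\<Prod>e\<in>I. if e \<in> S then (if b then \<rho> else 1 - \<rho>) else 1)"
    by (rule prod.cong) (use assms in \<open>auto simp: measure_pmf_single\<close>)
  also have "\<dots> = (\<Prod>e\<in>I \<inter> {e. e \<in> S}. (if b then \<rho> else 1 - \<rho>)) * (\<Prod>e\<in>I \<inter> - {e. e \<in> S}. 1)"
    by (rule prod.If_cases[OF finI])
  also have "I \<inter> {e. e \<in> S} = S" using assms(1) unfolding I_def by auto
  finally show ?thesis by simp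
qed

lemma prob_union_le:
  fixes x :: real
  assumes "finite Idx" "A \<subseteq> (\<Union>i\<in>Idx. Ev i)" "\<And>i. i \<in> Idx \<Longrightarrow> measure_pmf.prob p (Ev i) \<le> x"
  shows "measure_pmf.prob p A \<le> card Idx * x"
proof -
  have "measure_pmf.prob p A \<le> measure_pmf.prob p (\<Union>i\<in>Idx. Ev i)"
    by (rule measure_pmf.finite_measure_mono[OF assms(2)]) simp
  also have "\<dots> \<le> (\<Sum>i\<in>Idx. measure_pmf.prob p (Ev i))"
    by (rule measure_pmf.finite_measure_subadditive_finite[OF assms(1)]) simp
  also have "\<dots> \<le> (\<Sum>i\<in>Idx. x)" by (rule sum_mono) (rule assms(3))
  also have "\<dots> = card Idx * x" by simp
  finally show ?thesis .
qed

lemma prob_A: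
  fixes \<rho> :: real
  assumes B: "B \<subseteq> {..<M} \<times> {..<M}" "card B = n" "r \<le> n" and rho: "0 \<le> \<rho>" "\<rho> \<le> 1"
  shows "measure_pmf.prob (Omega M \<rho>) {col. \<not> (r \<le> card {e\<in>B. col e})} \<le> (n choose r) * (1 - \<rho>) ^ (n - r)"
proof -
  have finB: "finite B" using B(1) finite_subset by blast
  define Idx where "Idx = {W. W \<subseteq> B \<and> card W = n - r}"
  have finIdx: "finite Idx" unfolding Idx_def using finB by simp
  have cIdx: "card Idx = n choose r" unfolding Idx_def using n_subsets[OF finB, of "n - r"] B(2,3)
    by (simp add: binomial_symmetric[symmetric])
  have cover: "{col. \<not> (r \<le> card {e\<in>B. col e})} \<subseteq> (\<Union>W\<in>Idx. {col. \<forall>e\<in>W. col e = False})"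
  proof
    fix col assume "col \<in> {col. \<not> (r \<le> card {e\<in>B. col e})}"
    hence lt: "card {e\<in>B. col e} < r" by simp
    have "card {e\<in>B. \<not> col e} = n - card {e\<in>B. col e}"
    proof -
      have "{e\<in>B. \<not> col e} = B - {e\<in>B. col e}" by auto
      thus ?thesis using B(2) finB by (simp add: card_Diff_subset)
    qed
    hence "n - r \<le> card {e\<in>B. \<not> col e}" using lt by linarith
    then obtain W where W: "W \<subseteq> {e\<in>B. \<not> col e}" "card W = n - r" by (meson obtain_subset_with_card_n)
    hence "W \<in> Idx" unfolding Idx_def by auto
    moreover have "\<forall>e\<in>W. col e = False" using W by auto
    ultimately show "col \<in> (\<Union>W\<in>Idx. {col. \<forall>e\<in>W. col e = False})" by blast
  qed
  have "measure_pmf.prob (Omega M \<rho>) {col. \<not> (r \<le> card {e\<in>B. col e})} \<le> card Idx * (1 - \<rho>) ^ (n - r)"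
  proof (rule prob_union_le[OF finIdx cover])
    fix W assume "W \<in> Idx"
    hence "W \<subseteq> {..<M} \<times> {..<M}" "card W = n - r" using B(1) unfolding Idx_def by auto
    thus "measure_pmf.prob (Omega M \<rho>) {col. \<forall>e\<in>W. col e = False} \<le> (1 - \<rho>) ^ (n - r)"
      using prob_allcol[of W M \<rho> False] rho by simp
  qed
  thus ?thesis using cIdx by simp
qed

context Hgraph begin

lemma prob_D:
  assumes B: "B \<subseteq> {..<M} \<times> {..<M}" and NB: "card {X\<in>Cop M. X \<inter> B \<noteq> {}} \<le> NB"
    and rho: "0 \<le> \<rho>" "\<rho> \<le> 1"
  shows "measure_pmf.prob (Omega M \<rho>)
     {col. \<exists>F. F \<subseteq> {X\<in>Cop M. X \<inter> B \<noteq> {}} \<and> card F = s \<and> disjoint F \<and> (\<forall>X\<in>F. \<forall>e\<in>X. col e)}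
     \<le> real NB ^ s / fact s * \<rho> ^ (card E * s)"
proof -
  define CB where "CB = {X\<in>Cop M. X \<inter> B \<noteq> {}}"
  have finCB: "finite CB" unfolding CB_def using finite_Cop by simp
  define Idx where "Idx = {F. F \<subseteq> CB \<and> card F = s \<and> disjoint F}"
  have finIdx: "finite Idx" unfolding Idx_def using finCB by simp
  have "card Idx \<le> card {F. F \<subseteq> CB \<and> card F = s}"
    by (rule card_mono) (auto simp: Idx_def finCB)
  also have "\<dots> = card CB choose s" by (rule n_subsets[OF finCB])
  finally have "real (card Idx) \<le> real (card CB choose s)" by simp
  also have "\<dots> \<le> real (card CB) ^ s / fact s"
  proof -
    have "real (card CB choose s) * fact s \<le> real (card CB) ^ s"
      using binomial_fact_pow[of "card CB" s] by (metis of_nat_fact of_nat_le_iff of_nat_mult of_nat_power)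
    thus ?thesis by (simp add: pos_le_divide_eq)
  qed
  also have "\<dots> \<le> real NB ^ s / fact s"
    using NB unfolding CB_def by (intro divide_right_mono power_mono) auto
  finally have cIdx: "real (card Idx) \<le> real NB ^ s / fact s" .
  have cover: "{col. \<exists>F. F \<subseteq> CB \<and> card F = s \<and> disjoint F \<and> (\<forall>X\<in>F. \<forall>e\<in>X. col e)}
      \<subseteq> (\<Union>F\<in>Idx. {col. \<forall>e\<in>\<Union>F. col e = True})"
    unfolding Idx_def by blast
  have "measure_pmf.prob (Omega M \<rho>) {col. \<exists>F. F \<subseteq> CB \<and> card F = s \<and> disjoint F \<and> (\<forall>X\<in>F. \<forall>e\<in>X. col e)}
      \<le> card Idx * \<rho> ^ (card E * s)"
  proof (rule prob_union_le[OF finIdx cover])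
    fix F assume "F \<in> Idx"
    hence F: "F \<subseteq> CB" "card F = s" "disjoint F" unfolding Idx_def by auto
    have sub: "\<Union>F \<subseteq> {..<M} \<times> {..<M}" using F(1) Cop_sub unfolding CB_def by blast
    have "card (\<Union>F) = sum card F"
    proof (rule card_Union_disjoint[OF F(3)])
      fix A assume "A \<in> F"
      hence "A \<subseteq> {..<M} \<times> {..<M}" using sub by blast
      thus "finite A" by (rule finite_subset) simp
    qed
    also have "\<dots> = sum (\<lambda>_. card E) F" by (rule sum.cong) (use F(1) card_Cop in \<open>auto simp: CB_def\<close>)
    also have "\<dots> = card E * s" using F(2) by simp
    finally have "card (\<Union>F) = card E * s" .
    thus "measure_pmf.prob (Omega M \<rho>) {col. \<forall>e\<in>\<Union>F. col e = True} \<le> \<rho> ^ (card E * s)"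
      using prob_allcol[OF sub rho, of True] by simp
  qed
  also have "\<dots> \<le> real NB ^ s / fact s * \<rho> ^ (card E * s)"
    by (rule mult_right_mono[OF cIdx]) (use rho in simp)
  finally show ?thesis unfolding CB_def .
qed

end


context Hgraph begin

lemma exists_good:
  fixes \<rho> :: real
  assumes rho: "0 \<le> \<rho>" "\<rho> \<le> 1" and qs: "card E * s \<le> t * t"
    and bound: "real ((M choose t) * (M choose t)) *
       (real (t * t choose (card E * s)) * (1 - \<rho>) ^ (t * t - card E * s)
        + real (t * t * card E * (4 * (2*M)^(card V - 2))) ^ s / fact s * \<rho> ^ (card E * s)) < 1"
  shows "\<exists>col. \<forall>S T. S \<subseteq> {..<M} \<longrightarrow> T \<subseteq> {..<M} \<longrightarrow> card S = t \<longrightarrow> card T = t \<longrightarrow>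
     card E * s \<le> card {e \<in> S \<times> T. col e} \<and>
     \<not>(\<exists>F. F \<subseteq> {X\<in>Cop M. X \<inter> (S \<times> T) \<noteq> {}} \<and> card F = s \<and> disjoint F \<and> (\<forall>X\<in>F. \<forall>e\<in>X. col e))"
proof -
  define NB where "NB = t * t * card E * (4 * (2*M)^(card V - 2))"
  define a where "a = real (t * t choose (card E * s)) * (1 - \<rho>) ^ (t * t - card E * s)"
  define d where "d = real NB ^ s / fact s * \<rho> ^ (card E * s)"
  define Sub where "Sub = {S. S \<subseteq> {..<M} \<and> card S = t}"
  define Idx where "Idx = Sub \<times> Sub"
  define EA where "EA = (\<lambda>ST :: nat set \<times> nat set. {col. \<not> (card E * s \<le> card {e \<in> fst ST \<times> snd ST. col e})})"
  define ED where "ED = (\<lambda>ST :: nat set \<times> nat set. {col. \<exists>F. F \<subseteq> {X\<in>Cop M. X \<inter> (fst ST \<times> snd ST) \<noteq> {}} \<and> card F = s \<and> disjoint F \<and> (\<forall>X\<in>F. \<forall>e\<in>X. col e)})"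
  define Bad where "Bad = (\<Union>ST\<in>Idx. EA ST \<union> ED ST)"
  have finSub: "finite Sub" unfolding Sub_def by simp
  have cSub: "card Sub = M choose t" unfolding Sub_def using n_subsets[of "{..<M}" t] by simp
  have finIdx: "finite Idx" unfolding Idx_def using finSub by simp
  have cIdx: "card Idx = (M choose t) * (M choose t)" unfolding Idx_def using cSub finSub by (simp add: card_cartesian_product)
  have "measure_pmf.prob (Omega M \<rho>) Bad \<le> card Idx * (a + d)"
  proof (rule prob_union_le[OF finIdx])
    show "Bad \<subseteq> (\<Union>ST\<in>Idx. EA ST \<union> ED ST)" unfolding Bad_def by simp
    fix ST assume "ST \<in> Idx"
    then obtain S T where ST: "ST = (S,T)" "S \<subseteq> {..<M}" "T \<subseteq> {..<M}" "card S = t" "card T = t"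
      unfolding Idx_def Sub_def by auto
    have Bsub: "S \<times> T \<subseteq> {..<M} \<times> {..<M}" using ST by auto
    have cB: "card (S \<times> T) = t * t" using ST by (simp add: card_cartesian_product)
    have finB: "finite (S \<times> T)" using Bsub finite_subset by blast
    have "measure_pmf.prob (Omega M \<rho>) (EA ST \<union> ED ST) \<le> measure_pmf.prob (Omega M \<rho>) (EA ST) + measure_pmf.prob (Omega M \<rho>) (ED ST)"
      by (rule measure_Un_le) simp_all
    also have "measure_pmf.prob (Omega M \<rho>) (EA ST) \<le> a"
      unfolding EA_def a_def ST(1) fst_conv snd_conv by (rule prob_A[OF Bsub cB qs rho])
    also have "measure_pmf.prob (Omega M \<rho>) (ED ST) \<le> d"
      unfolding ED_def d_def ST(1) fst_conv snd_conv
    proof (rule prob_D[OF Bsub _ rho])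
      show "card {X \<in> Cop M. X \<inter> S \<times> T \<noteq> {}} \<le> NB" unfolding NB_def
        using count_CopB[OF finB, of M] cB by simp
    qed
    finally show "measure_pmf.prob (Omega M \<rho>) (EA ST \<union> ED ST) \<le> a + d" by simp
  qed
  also have "\<dots> < 1" using bound unfolding cIdx a_def d_def NB_def by simp
  finally have "Bad \<noteq> UNIV" by auto
  then obtain col where col: "col \<notin> Bad" by auto
  show ?thesis
  proof (intro exI[of _ col] allI impI)
    fix S T assume "S \<subseteq> {..<M}" "T \<subseteq> {..<M}" "card S = t" "card T = t"
    hence "(S,T) \<in> Idx" unfolding Idx_def Sub_def by auto
    hence "col \<notin> EA (S,T)" "col \<notin> ED (S,T)" using col unfolding Bad_def by auto
    thus "card E * s \<le> card {e \<in> S \<times> T. col e} \<and>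
     \<not>(\<exists>F. F \<subseteq> {X\<in>Cop M. X \<inter> (S \<times> T) \<noteq> {}} \<and> card F = s \<and> disjoint F \<and> (\<forall>X\<in>F. \<forall>e\<in>X. col e))"
      unfolding EA_def ED_def by simp
  qed
qed

end


lemma pow_le_self: fixes b :: real assumes "0 \<le> b" "b \<le> 1" "n \<ge> 1" shows "b ^ n \<le> b"
proof -
  have "b ^ n = b * b ^ (n - 1)" using assms(3) by (metis power_eq_if not_one_le_zero)
  also have "\<dots> \<le> b * 1" by (rule mult_left_mono) (use assms in \<open>auto intro: power_le_one\<close>)
  finally show ?thesis by simp
qed

lemma inv_le1: fixes x :: real shows "1 \<le> x \<Longrightarrow> 1 / x \<le> 1 \<and> 0 \<le> 1 / x" by simp

lemma one_minus_pow_half: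
  fixes n :: nat and \<rho> :: real
  assumes "n \<ge> 1" "\<rho> = 1 / real n"
  shows "(1 - \<rho>) ^ n \<le> 1 / 2"
proof -
  have r: "0 \<le> \<rho>" "\<rho> \<le> 1" using assms by auto
  have "(1 - \<rho>) ^ n \<le> exp (- \<rho>) ^ n"
    by (rule power_mono) (use exp_ge_add_one_self[of "-\<rho>"] r in auto)
  also have "\<dots> = exp (- \<rho> * n)" by (simp add: exp_of_nat_mult[symmetric] mult.commute)
  also have "- \<rho> * n = -1" using assms by simp
  also have "exp (-1) \<le> (1::real) / 2"
  proof -
    have "2 \<le> exp (1::real)" using exp_ge_add_one_self[of 1] by simp
    thus ?thesis by (simp add: exp_minus field_simps)
  qed
  finally show ?thesis .
qed

lemma numA:
  fixes k D c1 m N1 :: nat and \<rho> :: real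
  assumes k: "k \<ge> 2" and D: "D \<ge> 2" and big: "8 * k ^ c1 \<le> 2 ^ k"
    and N1: "N1 \<le> k ^ (c1 * k ^ D)"
    and m: "m \<ge> k ^ (D - 1) * (k ^ D * (k - 1))"
    and rho: "\<rho> = 1 / real (k ^ (D - 1))"
  shows "real N1 * (1 - \<rho>) ^ m \<le> 1 / 4"
proof -
  have kD1: "k ^ (D - 1) \<ge> 1" using k by simp
  have kr: "real (k ^ (D - 1)) \<ge> 1" using kD1 by (metis of_nat_1 of_nat_le_iff)
  have r: "0 \<le> \<rho>" "\<rho> \<le> 1" unfolding rho using inv_le1[OF kr] by auto
  have "(1 - \<rho>) ^ m \<le> (1 - \<rho>) ^ (k ^ (D - 1) * (k ^ D * (k - 1)))"
    by (rule power_decreasing[OF m]) (use r in auto)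
  also have "\<dots> = ((1 - \<rho>) ^ (k ^ (D - 1))) ^ (k ^ D * (k - 1))" by (simp add: power_mult)
  also have "\<dots> \<le> (1 / 2) ^ (k ^ D * (k - 1))"
    by (rule power_mono[OF one_minus_pow_half[OF kD1 rho]]) (use r in auto)
  finally have 1: "(1 - \<rho>) ^ m \<le> (1 / 2) ^ (k ^ D * (k - 1))" .
  have "real N1 \<le> real k ^ (c1 * k ^ D)" using N1 by (metis of_nat_le_iff of_nat_power)
  hence "real N1 * (1 - \<rho>) ^ m \<le> real k ^ (c1 * k ^ D) * (1 / 2) ^ (k ^ D * (k - 1))"
    using 1 r by (intro mult_mono) auto
  also have "\<dots> = (real k ^ c1 * (1 / 2) ^ (k - 1)) ^ (k ^ D)"
  proof -
    have "real k ^ (c1 * k ^ D) = (real k ^ c1) ^ (k ^ D)" by (rule power_mult)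
    moreover have "((1::real) / 2) ^ (k ^ D * (k - 1)) = ((1 / 2) ^ (k - 1)) ^ (k ^ D)"
      by (subst mult.commute) (rule power_mult)
    ultimately show ?thesis by (simp only: power_mult_distrib)
  qed
  also have b4: "real k ^ c1 * (1 / 2) ^ (k - 1) \<le> 1 / 4"
  proof -
    have "real (8 * k ^ c1) \<le> real (2 ^ k)" using big by (simp only: of_nat_le_iff)
    hence "8 * real k ^ c1 \<le> 2 ^ k" by simp
    moreover have "(2::real) ^ k = 2 * 2 ^ (k - 1)" using k by (metis Suc_diff_1 not_numeral_le_zero not_gr0 power_Suc dual_order.trans one_le_numeral)
    ultimately have "real k ^ c1 * 4 \<le> 2 ^ (k - 1)" by simp
    moreover have "real k ^ c1 * (1 / 2) ^ (k - 1) = real k ^ c1 / 2 ^ (k - 1)" by (simp add: power_one_over)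
    ultimately show ?thesis by (simp add: pos_divide_le_eq)
  qed
  hence "(real k ^ c1 * (1 / 2) ^ (k - 1)) ^ (k ^ D) \<le> real k ^ c1 * (1 / 2) ^ (k - 1)"
    using k by (intro pow_le_self) auto
  finally show ?thesis using b4 by linarith
qed

lemma numD:
  fixes k D L q N2 NB s Z :: nat and \<rho> :: real
  assumes k: "k \<ge> 2" and D: "D \<ge> 2" and s: "s = L * k ^ D" and L: "L = 4 * D + 3"
    and N2: "N2 \<le> k ^ ((4 * D + 2) * k ^ D)"
    and NB: "real NB * \<rho> ^ q \<le> real Z * real k ^ (D - 2)"
    and big: "4 * (3 * Z) ^ L \<le> k" and r: "0 \<le> \<rho>"
  shows "real N2 * (real NB ^ s / fact s * \<rho> ^ (q * s)) \<le> 1 / 4"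
proof -
  define x where "x = real k"
  have x2: "x \<ge> 2" unfolding x_def using k by simp
  have kD: "k ^ D \<ge> 1" using k by simp
  have spos: "s \<ge> 1" unfolding s L using kD by simp
  have sreal: "real s = real L * x ^ D" unfolding s x_def by simp
  define w where "w = real (3 * Z) / x ^ 2"
  have w0: "0 \<le> w" unfolding w_def by simp
  define y where "y = 3 * (real NB * \<rho> ^ q) / real s"
  have y0: "0 \<le> y" unfolding y_def using r by simp
  have fs: "(real s / 3) ^ s \<le> fact s" by (rule fact_ge_pow3)
  have s3pos: "0 < (real s / 3) ^ s" using spos by simp
  have "real NB ^ s / fact s * \<rho> ^ (q * s) = (real NB * \<rho> ^ q) ^ s / fact s"
    by (simp add: power_mult power_mult_distrib)
  also have "\<dots> \<le> (real NB * \<rho> ^ q) ^ s / (real s / 3) ^ s"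
    by (rule divide_left_mono[OF fs]) (use r s3pos in auto)
  also have "\<dots> = y ^ s" unfolding y_def by (simp add: power_divide field_simps)
  finally have 1: "real NB ^ s / fact s * \<rho> ^ (q * s) \<le> y ^ s" .
  have "y \<le> 3 * (real Z * x ^ (D - 2)) / (real L * x ^ D)"
    unfolding y_def sreal using NB spos x2 L unfolding x_def
    by (intro divide_right_mono mult_left_mono) auto
  also have "\<dots> \<le> w"
  proof -
    have "D = D - 2 + 2" using D by simp
    hence "x ^ D = x ^ (D - 2) * x ^ 2" by (metis power_add)
    hence "3 * (real Z * x ^ (D - 2)) / (real L * x ^ D) = real (3 * Z) / x ^ 2 / real L"
      using x2 by (simp add: field_simps)
    also have "\<dots> \<le> real (3 * Z) / x ^ 2 / 1"
      by (rule divide_left_mono) (use L x2 in auto)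
    also have "\<dots> = real (3 * Z) / x ^ 2" by simp
    finally show ?thesis unfolding w_def .
  qed
  finally have yw: "y \<le> w" .
  have "real N2 * (real NB ^ s / fact s * \<rho> ^ (q * s)) \<le> x ^ ((4 * D + 2) * k ^ D) * w ^ s"
  proof (rule mult_mono)
    show "real N2 \<le> x ^ ((4 * D + 2) * k ^ D)" using N2 unfolding x_def by (metis of_nat_le_iff of_nat_power)
    show "real NB ^ s / fact s * \<rho> ^ (q * s) \<le> w ^ s" using 1 power_mono[OF yw y0, of s] by linarith
  qed (use x2 w0 r in auto)
  also have "\<dots> = (x ^ (4 * D + 2) * w ^ L) ^ (k ^ D)"
  proof -
    have "x ^ ((4 * D + 2) * k ^ D) = (x ^ (4 * D + 2)) ^ (k ^ D)" by (rule power_mult)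
    moreover have "w ^ s = (w ^ L) ^ (k ^ D)" unfolding s by (rule power_mult)
    ultimately show ?thesis by (simp only: power_mult_distrib)
  qed
  also have b4: "x ^ (4 * D + 2) * w ^ L \<le> 1 / 4"
  proof -
    have "x ^ (4 * D + 2) * w ^ L = real (3 * Z) ^ L / x ^ (4 * D + 4)"
    proof -
      have "w ^ L = real (3 * Z) ^ L / x ^ (2 * L)" unfolding w_def by (simp add: power_divide power_mult)
      moreover have "x ^ (2 * L) = x ^ (4 * D + 2) * x ^ (4 * D + 4)"
      proof -
        have "2 * L = (4 * D + 2) + (4 * D + 4)" unfolding L by simp
        thus ?thesis by (metis power_add)
      qed
      ultimately show ?thesis using x2 by (simp add: field_simps)
    qed
    also have "\<dots> \<le> real (3 * Z) ^ L / x"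
    proof (rule divide_left_mono)
      show "x \<le> x ^ (4 * D + 4)" using x2 by (intro self_le_power) auto
    qed (use x2 in auto)
    also have "\<dots> \<le> 1 / 4"
    proof -
      have "real (4 * (3 * Z) ^ L) \<le> x" using big unfolding x_def by (simp only: of_nat_le_iff)
      thus ?thesis using x2 by (simp add: pos_divide_le_eq)
    qed
    finally show ?thesis .
  qed
  hence "(x ^ (4 * D + 2) * w ^ L) ^ (k ^ D) \<le> x ^ (4 * D + 2) * w ^ L"
    using kD x2 w0 by (intro pow_le_self) auto
  finally show ?thesis using b4 by linarith
qed

lemma numeric:
  fixes P q k :: nat
  defines "D \<equiv> 3 * P + 4"
  defines "L \<equiv> 4 * D + 3"
  defines "c1 \<equiv> 2 * (2 * D + 1) + 2 * D * q * L"
  defines "Z \<equiv> q * 4 * 2 ^ P"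
  defines "t \<equiv> k ^ D" and "M \<equiv> k ^ (2 * D + 1)" and "s \<equiv> L * k ^ D"
  defines "\<rho> \<equiv> 1 / real (k ^ (D - 1))"
  assumes P: "P \<ge> 1" and q: "q \<ge> 2 * P + 2"
    and k: "k \<ge> 2" "k \<ge> q * L" "k \<ge> 8 * (c1 + 1) ^ (c1 + 1)" "k \<ge> 4 * (3 * Z) ^ L"
  shows "q * s \<le> t * t" and "0 \<le> \<rho>" and "\<rho> \<le> 1"
    and "real ((M choose t) * (M choose t)) *
       (real (t * t choose (q * s)) * (1 - \<rho>) ^ (t * t - q * s)
        + real (t * t * q * (4 * (2*M)^P)) ^ s / fact s * \<rho> ^ (q * s)) < 1"
proof -
  have D2: "D \<ge> 2" unfolding D_def by simp
  have kD1: "k ^ (D - 1) \<ge> 1" using k by simp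
  have kr: "real (k ^ (D - 1)) \<ge> 1" using kD1 by (metis of_nat_1 of_nat_le_iff)
  show r0: "0 \<le> \<rho>" and r1: "\<rho> \<le> 1" unfolding \<rho>_def using inv_le1[OF kr] by auto
  have qs1: "q * s \<le> k ^ (D + 1)"
  proof -
    have "q * s = (q * L) * k ^ D" unfolding s_def by simp
    also have "\<dots> \<le> k * k ^ D" using k(2) by simp
    finally show ?thesis by simp
  qed
  have tt: "t * t = k ^ (2 * D - 1) * k"
  proof -
    have "t * t = k ^ (D + D)" unfolding t_def by (simp add: power_add)
    also have "D + D = (2 * D - 1) + 1" using D2 by simp
    finally show ?thesis by simp
  qed
  have qs2: "q * s \<le> k ^ (2 * D - 1)"
  proof -
    have "D + 1 \<le> 2 * D - 1" using D2 by simp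
    hence "k ^ (D + 1) \<le> k ^ (2 * D - 1)" using k(1) by (intro power_increasing) auto
    thus ?thesis using qs1 by linarith
  qed
  show qs: "q * s \<le> t * t" using qs2 tt k(1)
    by (metis le_trans mult_le_mono2 mult_1_right one_le_numeral le_trans[OF one_le_numeral k(1)])
  have m: "t * t - q * s \<ge> k ^ (D - 1) * (k ^ D * (k - 1))"
  proof -
    have "k ^ (D - 1) * (k ^ D * (k - 1)) = k ^ (2 * D - 1) * (k - 1)"
    proof -
      have "(D - 1) + D = 2 * D - 1" using D2 by simp
      hence "k ^ (D - 1) * k ^ D = k ^ (2 * D - 1)" by (metis power_add)
      thus ?thesis by (metis mult.assoc)
    qed
    also have "\<dots> = k ^ (2 * D - 1) * k - k ^ (2 * D - 1)" by (simp add: diff_mult_distrib2)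
    also have "\<dots> \<le> t * t - q * s" using tt qs2 by simp
    finally show ?thesis .
  qed
  have Mt: "M choose t \<le> k ^ ((2 * D + 1) * k ^ D)"
  proof -
    have "t \<le> M" unfolding t_def M_def using k(1) by (intro power_increasing) auto
    hence "M choose t \<le> M ^ t" by (rule binomial_le_pow)
    also have "M ^ t = k ^ ((2 * D + 1) * k ^ D)" unfolding M_def t_def by (rule power_mult[symmetric])
    finally show ?thesis .
  qed
  have N2: "(M choose t) * (M choose t) \<le> k ^ ((4 * D + 2) * k ^ D)"
  proof -
    have "(M choose t) * (M choose t) \<le> k ^ ((2 * D + 1) * k ^ D) * k ^ ((2 * D + 1) * k ^ D)"
      by (rule mult_le_mono[OF Mt Mt])
    also have "\<dots> = k ^ ((4 * D + 2) * k ^ D)"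
    proof -
      have "(4 * D + 2) * k ^ D = (2 * D + 1) * k ^ D + (2 * D + 1) * k ^ D" by simp
      thus ?thesis by (metis power_add)
    qed
    finally show ?thesis .
  qed
  have N1: "(M choose t) * (M choose t) * (t * t choose (q * s)) \<le> k ^ (c1 * k ^ D)"
  proof -
    have "t * t choose (q * s) \<le> (t * t) ^ (q * s)" by (rule binomial_le_pow[OF qs])
    also have "\<dots> = k ^ (2 * D * q * L * k ^ D)"
    proof -
      have "t * t = k ^ (2 * D)" unfolding t_def by (simp add: power_add[symmetric] mult_2)
      hence "(t * t) ^ (q * s) = k ^ (2 * D * (q * s))" by (simp add: power_mult)
      also have "2 * D * (q * s) = 2 * D * q * L * k ^ D" unfolding s_def by simp
      finally show ?thesis .
    qed
    finally have "t * t choose (q * s) \<le> k ^ (2 * D * q * L * k ^ D)" .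
    hence "(M choose t) * (M choose t) * (t * t choose (q * s)) \<le> k ^ ((4 * D + 2) * k ^ D) * k ^ (2 * D * q * L * k ^ D)"
      using N2 by (rule mult_le_mono[rotated])
    also have "\<dots> = k ^ (c1 * k ^ D)"
    proof -
      have "c1 * k ^ D = (4 * D + 2) * k ^ D + 2 * D * q * L * k ^ D" unfolding c1_def by (simp add: algebra_simps)
      thus ?thesis by (metis power_add)
    qed
    finally show ?thesis .
  qed
  have big1: "8 * k ^ c1 \<le> 2 ^ k" by (rule pow_le_two_pow) (use k(3) in auto)
  have A: "real ((M choose t) * (M choose t) * (t * t choose (q * s))) * (1 - \<rho>) ^ (t * t - q * s) \<le> 1 / 4"
    by (rule numA[OF k(1) D2 big1 N1 m meta_eq_to_obj_eq[OF \<rho>_def]])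
  have NB: "real (t * t * q * (4 * (2*M)^P)) * \<rho> ^ q \<le> real Z * real k ^ (D - 2)"
  proof -
    define e2 where "e2 = (D - 1) * (2 * P + 2)"
    have ex: "2 * D + (2 * D + 1) * P = (D - 2) + e2" unfolding e2_def D_def by (simp add: algebra_simps)
    have tt2: "t * t = k ^ (2 * D)" unfolding t_def by (simp add: power_add[symmetric] mult_2)
    have M2: "(2 * M) ^ P = 2 ^ P * k ^ ((2 * D + 1) * P)" unfolding M_def
      by (simp only: power_mult_distrib power_mult)
    have "t * t * q * (4 * (2*M)^P) = (q * 4 * 2 ^ P) * (k ^ (2 * D) * k ^ ((2 * D + 1) * P))"
      unfolding tt2 M2 by (simp only: mult_ac)
    also have "\<dots> = Z * k ^ (2 * D + (2 * D + 1) * P)" unfolding Z_def by (simp only: power_add)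
    finally have "t * t * q * (4 * (2*M)^P) = Z * k ^ (2 * D + (2 * D + 1) * P)" .
    hence e: "real (t * t * q * (4 * (2*M)^P)) = real Z * real k ^ (D - 2) * real k ^ e2"
      unfolding ex by (simp add: power_add)
    have "\<rho> ^ q \<le> \<rho> ^ (2 * P + 2)" by (rule power_decreasing[OF q]) (use r0 r1 in auto)
    also have "\<rho> ^ (2 * P + 2) = 1 / real k ^ e2" unfolding \<rho>_def e2_def by (simp only: power_one_over of_nat_power power_mult)
    finally have rq: "\<rho> ^ q \<le> 1 / real k ^ e2" .
    have "real (t * t * q * (4 * (2*M)^P)) * \<rho> ^ q \<le> real Z * real k ^ (D - 2) * real k ^ e2 * (1 / real k ^ e2)"
      unfolding e by (rule mult_left_mono[OF rq]) simp
    also have "\<dots> = real Z * real k ^ (D - 2)" using k(1) by simp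
    finally show ?thesis .
  qed
  have B: "real ((M choose t) * (M choose t)) * (real (t * t * q * (4 * (2*M)^P)) ^ s / fact s * \<rho> ^ (q * s)) \<le> 1 / 4"
    by (rule numD[OF k(1) D2 meta_eq_to_obj_eq[OF s_def] meta_eq_to_obj_eq[OF L_def] N2 NB k(4) r0])
  show "real ((M choose t) * (M choose t)) *
       (real (t * t choose (q * s)) * (1 - \<rho>) ^ (t * t - q * s)
        + real (t * t * q * (4 * (2*M)^P)) ^ s / fact s * \<rho> ^ (q * s)) < 1"
  proof -
    have "real ((M choose t) * (M choose t)) *
       (real (t * t choose (q * s)) * (1 - \<rho>) ^ (t * t - q * s)
        + real (t * t * q * (4 * (2*M)^P)) ^ s / fact s * \<rho> ^ (q * s)) =
       real ((M choose t) * (M choose t) * (t * t choose (q * s))) * (1 - \<rho>) ^ (t * t - q * s)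
       + real ((M choose t) * (M choose t)) * (real (t * t * q * (4 * (2*M)^P)) ^ s / fact s * \<rho> ^ (q * s))"
      by (simp only: of_nat_mult distrib_left mult.assoc)
    thus ?thesis using A B by linarith
  qed
qed


lemma colour_copy_mono:
  assumes "colour_copy N c col V E" "N \<le> N'"
  shows "colour_copy N' c col V E"
proof -
  obtain f where f: "inj_on f V" "f ` V \<subseteq> KNN_verts N"
    "\<forall>e\<in>E. \<exists>i<N. \<exists>j<N. f ` e = {Inl i, Inr j} \<and> c i j = col"
    using assms(1) unfolding colour_copy_def by blast
  have "KNN_verts N \<subseteq> KNN_verts N'" using assms(2) unfolding KNN_verts_def by auto
  moreover have "\<forall>e\<in>E. \<exists>i<N'. \<exists>j<N'. f ` e = {Inl i, Inr j} \<and> c i j = col"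
  proof
    fix e assume "e \<in> E"
    hence "\<exists>i<N. \<exists>j<N. f ` e = {Inl i, Inr j} \<and> c i j = col" by (rule bspec[OF f(3)])
    then obtain i j where "i < N" "j < N" "f ` e = {Inl i, Inr j} \<and> c i j = col" by blast
    moreover have "i < N'" "j < N'" using calculation(1,2) assms(2) by auto
    ultimately show "\<exists>i<N'. \<exists>j<N'. f ` e = {Inl i, Inr j} \<and> c i j = col" by blast
  qed
  ultimately show ?thesis unfolding colour_copy_def using f(1,2) by blast
qed

lemma bip_arrows_mono:
  assumes "bip_arrows N V1 E1 V2 E2" "N \<le> N'" shows "bip_arrows N' V1 E1 V2 E2"
  unfolding bip_arrows_def
proof
  fix c
  have "colour_copy N c True V1 E1 \<or> colour_copy N c False V2 E2" using assms(1) unfolding bip_arrows_def by blast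
  thus "colour_copy N' c True V1 E1 \<or> colour_copy N' c False V2 E2"
    using colour_copy_mono[OF _ assms(2), of c True V1 E1] colour_copy_mono[OF _ assms(2), of c False V2 E2] by blast
qed

definition Kv :: "nat \<Rightarrow> nat set" where "Kv t = {..<2 * t}"
definition Ke :: "nat \<Rightarrow> nat set set" where "Ke t = (\<lambda>(i,j). {i, t + j}) ` ({..<t} \<times> {..<t})"

lemma Ke_mem: "i < t \<Longrightarrow> j < t \<Longrightarrow> {i, t + j} \<in> Ke t"
  unfolding Ke_def by force

lemma card_Ke: "card (Ke t) \<le> t * t"
  unfolding Ke_def using card_image_le[of "{..<t} \<times> {..<t}" "\<lambda>(i,j). {i, t + j}"]
  by (simp add: card_cartesian_product)

lemma bip_Ke: "bipartite_graph (Kv t) (Ke t)"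
  unfolding bipartite_graph_def sgraph_def
proof (intro conjI ballI exI[of _ "{..<t}"])
  show "finite (Kv t)" unfolding Kv_def by simp
  fix e assume "e \<in> Ke t"
  then obtain i j where ij: "i < t" "j < t" "e = {i, t + j}" unfolding Ke_def by auto
  show "e \<subseteq> Kv t" using ij unfolding Kv_def by auto
  show "card e = 2" using ij by simp
  have "e \<inter> {..<t} = {i}" using ij by auto
  thus "card (e \<inter> {..<t}) = 1" by simp
next
  show "{..<t} \<subseteq> Kv t" unfolding Kv_def by auto
qed

lemma noiso_Ke: assumes "t \<ge> 1" shows "no_isolated (Kv t) (Ke t)"
  unfolding no_isolated_def
proof
  fix v assume "v \<in> Kv t"
  hence v: "v < 2 * t" unfolding Kv_def by simp
  show "\<exists>e\<in>Ke t. v \<in> e"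
  proof (cases "v < t")
    case True thus ?thesis using Ke_mem[of v t 0] assms by auto
  next
    case False
    hence "v = t + (v - t)" "v - t < t" using v by auto
    thus ?thesis using Ke_mem[of 0 t "v - t"] assms by (metis insertCI less_le_trans less_numeral_extra(1))
  qed
qed

lemma box_from:
  fixes f :: "nat \<Rightarrow> nat + nat"
  assumes inj: "inj_on f (X \<union> Y)" and L: "\<forall>x\<in>X. \<exists>a. f x = Inl a" and R: "\<forall>y\<in>Y. \<exists>b. f y = Inr b"
    and K: "f ` (X \<union> Y) \<subseteq> KNN_verts M" and cX: "card X = t" and cY: "card Y = t"
    and ed: "\<forall>x\<in>X. \<forall>y\<in>Y. \<exists>a b. {f x, f y} = {Inl a, Inr b} \<and> \<not> c a b"
  shows "\<exists>S T. S \<subseteq> {..<M} \<and> T \<subseteq> {..<M} \<and> card S = t \<and> card T = t \<and> (\<forall>a\<in>S. \<forall>b\<in>T. \<not> c a b)"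
proof -
  define S where "S = projl ` f ` X"
  define T where "T = projr ` f ` Y"
  have fl: "f x = Inl (projl (f x))" if "x \<in> X" for x using L that by auto
  have fr: "f y = Inr (projr (f y))" if "y \<in> Y" for y using R that by auto
  have "inj_on (projl \<circ> f) X"
  proof
    fix x1 x2 assume "x1 \<in> X" "x2 \<in> X" "(projl \<circ> f) x1 = (projl \<circ> f) x2"
    hence "f x1 = f x2" using fl by (metis comp_apply)
    thus "x1 = x2" using inj \<open>x1 \<in> X\<close> \<open>x2 \<in> X\<close> by (auto dest: inj_onD)
  qed
  hence "card ((projl \<circ> f) ` X) = t" using cX by (simp only: card_image)
  hence cS: "card S = t" unfolding S_def by (simp only: image_comp)
  have "inj_on (projr \<circ> f) Y"
  proof
    fix x1 x2 assume "x1 \<in> Y" "x2 \<in> Y" "(projr \<circ> f) x1 = (projr \<circ> f) x2"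
    hence "f x1 = f x2" using fr by (metis comp_apply)
    thus "x1 = x2" using inj \<open>x1 \<in> Y\<close> \<open>x2 \<in> Y\<close> by (auto dest: inj_onD)
  qed
  hence "card ((projr \<circ> f) ` Y) = t" using cY by (simp only: card_image)
  hence cT: "card T = t" unfolding T_def by (simp only: image_comp)
  have SM: "S \<subseteq> {..<M}"
  proof
    fix a assume "a \<in> S"
    then obtain x where x: "x \<in> X" "a = projl (f x)" unfolding S_def by auto
    have "f x \<in> KNN_verts M" using K x(1) by blast
    hence "Inl a \<in> KNN_verts M" using fl[OF x(1)] x(2) by simp
    thus "a \<in> {..<M}" unfolding KNN_verts_def by auto
  qed
  have TM: "T \<subseteq> {..<M}"
  proof
    fix a assume "a \<in> T"
    then obtain x where x: "x \<in> Y" "a = projr (f x)" unfolding T_def by auto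
    have "f x \<in> KNN_verts M" using K x(1) by blast
    hence "Inr a \<in> KNN_verts M" using fr[OF x(1)] x(2) by simp
    thus "a \<in> {..<M}" unfolding KNN_verts_def by auto
  qed
  have blue: "\<forall>a\<in>S. \<forall>b\<in>T. \<not> c a b"
  proof (intro ballI)
    fix a b assume "a \<in> S" "b \<in> T"
    then obtain x y where xy: "x \<in> X" "y \<in> Y" "a = projl (f x)" "b = projr (f y)" unfolding S_def T_def by auto
    obtain a' b' where ab: "{f x, f y} = {Inl a', Inr b'}" "\<not> c a' b'" using ed xy(1,2) by blast
    have "{Inl a, Inr b} = ({Inl a', Inr b'} :: (nat + nat) set)" using ab(1) fl[OF xy(1)] fr[OF xy(2)] xy(3,4) by simp
    hence "a = a'" "b = b'" by (auto simp: doubleton_eq_iff)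
    thus "\<not> c a b" using ab(2) by simp
  qed
  show ?thesis using SM TM cS cT blue by blast
qed

lemma no_blue_box:
  assumes "colour_copy M c False (Kv t) (Ke t)" "t \<ge> 1"
  shows "\<exists>S T. S \<subseteq> {..<M} \<and> T \<subseteq> {..<M} \<and> card S = t \<and> card T = t \<and> (\<forall>a\<in>S. \<forall>b\<in>T. \<not> c a b)"
proof -
  obtain f where f: "inj_on f (Kv t)" "f ` Kv t \<subseteq> KNN_verts M"
    "\<forall>e\<in>Ke t. \<exists>i<M. \<exists>j<M. f ` e = {Inl i, Inr j} \<and> c i j = False"
    using assms(1) unfolding colour_copy_def by blast
  define X where "X = {..<t}"
  define Y where "Y = {t..<2*t}"
  have XY: "X \<union> Y = Kv t" unfolding X_def Y_def Kv_def by auto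
  have edge: "\<exists>a b. {f x, f y} = {Inl a, Inr b} \<and> \<not> c a b" if "x \<in> X" "y \<in> Y" for x y
  proof -
    have "{x, t + (y - t)} \<in> Ke t" using that unfolding X_def Y_def by (intro Ke_mem) auto
    hence "{x, y} \<in> Ke t" using that unfolding Y_def by auto
    hence "\<exists>i<M. \<exists>j<M. f ` {x, y} = {Inl i, Inr j} \<and> c i j = False" by (rule bspec[OF f(3)])
    thus ?thesis by auto
  qed
  have cX: "card X = t" "card Y = t" unfolding X_def Y_def by auto
  have t0: "0 \<in> X" "t \<in> Y" using assms(2) unfolding X_def Y_def by auto
  have opp: "(\<exists>a. f x = Inl a) \<longleftrightarrow> (\<exists>b. f y = Inr b)" if xy: "x \<in> X" "y \<in> Y" for x y
  proof -
    obtain a b where ab: "{f x, f y} = {Inl a, Inr b}" using edge[OF xy] by blast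
    hence "(f x = Inl a \<and> f y = Inr b) \<or> (f x = Inr b \<and> f y = Inl a)" by (auto simp: doubleton_eq_iff)
    thus ?thesis by auto
  qed
  have sumcase: "(\<exists>a. z = Inl a) \<or> (\<exists>b. z = Inr b)" for z :: "nat + nat" by (cases z) auto
  have notboth: "\<not> ((\<exists>a. z = Inl a) \<and> (\<exists>b. z = Inr b))" for z :: "nat + nat" by auto
  have injXY: "inj_on f (X \<union> Y)" "inj_on f (Y \<union> X)" using f(1) XY by (auto simp: Un_commute)
  have KXY: "f ` (X \<union> Y) \<subseteq> KNN_verts M" "f ` (Y \<union> X) \<subseteq> KNN_verts M" using f(2) XY by (auto simp: Un_commute)
  show ?thesis
  proof (cases "\<exists>a. f 0 = Inl a")
    case True
    have Ry: "\<forall>y\<in>Y. \<exists>b. f y = Inr b"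
    proof
      fix y assume "y \<in> Y" thus "\<exists>b. f y = Inr b" using opp[OF t0(1) \<open>y \<in> Y\<close>] True by blast
    qed
    hence ft: "\<exists>b. f t = Inr b" using t0(2) by blast
    have Lx: "\<forall>x\<in>X. \<exists>a. f x = Inl a"
    proof
      fix x assume "x \<in> X" thus "\<exists>a. f x = Inl a" using opp[OF \<open>x \<in> X\<close> t0(2)] ft by blast
    qed
    show ?thesis by (rule box_from[OF injXY(1) Lx Ry KXY(1) cX(1) cX(2)]) (use edge in blast)
  next
    case False
    have Ry: "\<forall>y\<in>Y. \<exists>b. f y = Inl b"
    proof
      fix y assume "y \<in> Y"
      hence "\<not> (\<exists>b. f y = Inr b)" using opp[OF t0(1) \<open>y \<in> Y\<close>] False by blast
      thus "\<exists>b. f y = Inl b" using sumcase[of "f y"] by blast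
    qed
    hence ft: "\<exists>b. f t = Inl b" using t0(2) by blast
    hence ft': "\<not> (\<exists>b. f t = Inr b)" using notboth[of "f t"] by blast
    have Lx: "\<forall>x\<in>X. \<exists>a. f x = Inr a"
    proof
      fix x assume "x \<in> X"
      hence "\<not> (\<exists>a. f x = Inl a)" using opp[OF \<open>x \<in> X\<close> t0(2)] ft' by blast
      thus "\<exists>a. f x = Inr a" using sumcase[of "f x"] by blast
    qed
    have edge': "\<forall>y\<in>Y. \<forall>x\<in>X. \<exists>a b. {f y, f x} = {Inl a, Inr b} \<and> \<not> c a b"
    proof (intro ballI)
      fix y x assume "y \<in> Y" "x \<in> X"
      from edge[OF \<open>x \<in> X\<close> \<open>y \<in> Y\<close>] show "\<exists>a b. {f y, f x} = {Inl a, Inr b} \<and> \<not> c a b"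
        by (simp only: insert_commute)
    qed
    show ?thesis by (rule box_from[OF injXY(2) Ry Lx KXY(2) cX(2) cX(1) edge'])
  qed
qed


lemma embed_K:
  assumes A: "A \<subseteq> {..<N}" "card A = s" and B: "B \<subseteq> {..<N}" "card B = s" and st: "t \<le> s"
    and blue: "\<forall>a\<in>A. \<forall>b\<in>B. c a b = False"
  shows "colour_copy N c False (Kv t) (Ke t)"
proof -
  have fA: "finite A" "finite B" using A(1) B(1) finite_subset by auto
  obtain g1 where g1: "g1 ` {..<t} \<subseteq> A" "inj_on g1 {..<t}" using card_le_inj[of "{..<t}" A] fA A st by auto
  obtain g2 where g2: "g2 ` {..<t} \<subseteq> B" "inj_on g2 {..<t}" using card_le_inj[of "{..<t}" B] fA B st by auto
  define f where "f = (\<lambda>v. if v < t then Inl (g1 v) else Inr (g2 (v - t)) :: nat + nat)"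
  have "inj_on f (Kv t)"
  proof
    fix v w assume vw: "v \<in> Kv t" "w \<in> Kv t" "f v = f w"
    show "v = w"
    proof (cases "v < t")
      case True
      show ?thesis
      proof (cases "w < t")
        case True
        thus ?thesis using \<open>v < t\<close> vw(3) g1(2) unfolding f_def by (auto dest: inj_onD)
      next
        case False thus ?thesis using \<open>v < t\<close> vw(3) unfolding f_def by auto
      qed
    next
      case False
      show ?thesis
      proof (cases "w < t")
        case True thus ?thesis using \<open>\<not> v < t\<close> vw(3) unfolding f_def by auto
      next
        case False
        hence "g2 (v - t) = g2 (w - t)" using \<open>\<not> v < t\<close> vw(3) unfolding f_def by auto
        moreover have "v - t < t" "w - t < t" using vw(1,2) \<open>\<not> v < t\<close> False unfolding Kv_def by auto
        ultimately have "v - t = w - t" using g2(2) by (auto dest: inj_onD)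
        thus ?thesis using \<open>\<not> v < t\<close> False by simp
      qed
    qed
  qed
  moreover have "f ` Kv t \<subseteq> KNN_verts N"
  proof
    fix z assume "z \<in> f ` Kv t"
    then obtain v where v: "v \<in> Kv t" "z = f v" by auto
    show "z \<in> KNN_verts N"
    proof (cases "v < t")
      case True
      hence "g1 v \<in> A" using g1(1) by auto
      thus ?thesis using v True A(1) unfolding f_def KNN_verts_def by auto
    next
      case False
      hence "v - t < t" using v(1) unfolding Kv_def by auto
      hence "g2 (v - t) \<in> B" using g2(1) by auto
      thus ?thesis using v False B(1) unfolding f_def KNN_verts_def by auto
    qed
  qed
  moreover have "\<forall>e\<in>Ke t. \<exists>i<N. \<exists>j<N. f ` e = {Inl i, Inr j} \<and> c i j = False"
  proof
    fix e assume "e \<in> Ke t"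
    then obtain i j where ij: "i < t" "j < t" "e = {i, t + j}" unfolding Ke_def by auto
    have "f ` e = {Inl (g1 i), Inr (g2 j)}" using ij unfolding f_def by auto
    moreover have "g1 i \<in> A" "g2 j \<in> B" using g1(1) g2(1) ij by auto
    ultimately show "\<exists>i<N. \<exists>j<N. f ` e = {Inl i, Inr j} \<and> c i j = False"
      using A(1) B(1) blue by blast
  qed
  ultimately show ?thesis unfolding colour_copy_def by blast
qed


context Hgraph begin

lemma embed_H:
  assumes A: "A \<subseteq> {..<N}" "card A = s" and B: "B \<subseteq> {..<N}" "card B = s" and st: "card V \<le> s"
    and red: "\<forall>a\<in>A. \<forall>b\<in>B. c a b = True"
  shows "colour_copy N c True V E"
proof -
  obtain X where X: "X \<subseteq> V" "\<forall>e\<in>E. card (e \<inter> X) = 1" using bip unfolding bipartite_graph_def by blast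
  have fA: "finite A" "finite B" using A(1) B(1) finite_subset by auto
  have fX: "finite X" "finite (V - X)" using X(1) finV finite_subset by auto
  have "card X \<le> card V" "card (V - X) \<le> card V" using X(1) finV by (auto intro: card_mono)
  hence cX: "card X \<le> card A" "card (V - X) \<le> card B" using A B st by auto
  obtain g1 where g1: "g1 ` X \<subseteq> A" "inj_on g1 X" using card_le_inj[OF fX(1) fA(1) cX(1)] by auto
  obtain g2 where g2: "g2 ` (V - X) \<subseteq> B" "inj_on g2 (V - X)" using card_le_inj[OF fX(2) fA(2) cX(2)] by auto
  define f where "f = (\<lambda>v. if v \<in> X then Inl (g1 v) else Inr (g2 v) :: nat + nat)"
  have "inj_on f V"
  proof
    fix v w assume vw: "v \<in> V" "w \<in> V" "f v = f w"
    show "v = w"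
    proof (cases "v \<in> X")
      case True
      show ?thesis
      proof (cases "w \<in> X")
        case True
        thus ?thesis using \<open>v \<in> X\<close> vw(3) g1(2) unfolding f_def by (auto dest: inj_onD)
      next
        case False thus ?thesis using \<open>v \<in> X\<close> vw(3) unfolding f_def by auto
      qed
    next
      case False
      show ?thesis
      proof (cases "w \<in> X")
        case True thus ?thesis using \<open>v \<notin> X\<close> vw(3) unfolding f_def by auto
      next
        case False
        hence "g2 v = g2 w" using \<open>v \<notin> X\<close> vw(3) unfolding f_def by auto
        moreover have "v \<in> V - X" "w \<in> V - X" using vw(1,2) \<open>v \<notin> X\<close> False by auto
        ultimately show "v = w" using g2(2) by (auto dest: inj_onD)
      qed
    qed
  qed
  moreover have "f ` V \<subseteq> KNN_verts N"
  proof
    fix z assume "z \<in> f ` V"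
    then obtain v where v: "v \<in> V" "z = f v" by auto
    show "z \<in> KNN_verts N"
    proof (cases "v \<in> X")
      case True
      hence "g1 v \<in> A" using g1(1) by auto
      thus ?thesis using v True A(1) unfolding f_def KNN_verts_def by auto
    next
      case False
      hence "g2 v \<in> B" using g2(1) v(1) by auto
      thus ?thesis using v False B(1) unfolding f_def KNN_verts_def by auto
    qed
  qed
  moreover have "\<forall>e\<in>E. \<exists>i<N. \<exists>j<N. f ` e = {Inl i, Inr j} \<and> c i j = True"
  proof
    fix e assume eE: "e \<in> E"
    obtain x y where xy: "e = {x, y}" "x \<noteq> y" using edge_card[OF eE] card_2_iff by metis
    have xyV: "x \<in> V" "y \<in> V" using edge_sub[OF eE] xy(1) by auto
    have c1: "card ({x, y} \<inter> X) = 1" using X(2) eE xy(1) by simp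
    have "(x \<in> X \<and> y \<notin> X) \<or> (y \<in> X \<and> x \<notin> X)"
    proof (rule ccontr)
      assume "\<not> ?thesis"
      hence "(x \<in> X \<and> y \<in> X) \<or> (x \<notin> X \<and> y \<notin> X)" by blast
      hence "{x, y} \<inter> X = {x, y} \<or> {x, y} \<inter> X = {}" by auto
      thus False using c1 xy(2) by auto
    qed
    thus "\<exists>i<N. \<exists>j<N. f ` e = {Inl i, Inr j} \<and> c i j = True"
    proof
      assume h: "x \<in> X \<and> y \<notin> X"
      have "f ` e = {Inl (g1 x), Inr (g2 y)}" using h xy(1) unfolding f_def by auto
      moreover have "g1 x \<in> A" "g2 y \<in> B" using g1(1) g2(1) h xyV by auto
      ultimately show ?thesis using A(1) B(1) red by blast
    next
      assume h: "y \<in> X \<and> x \<notin> X"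
      have "f ` e = {Inl (g1 y), Inr (g2 x)}" using h xy(1) unfolding f_def by auto
      moreover have "g1 y \<in> A" "g2 x \<in> B" using g1(1) g2(1) h xyV by auto
      ultimately show ?thesis using A(1) B(1) red by blast
    qed
  qed
  ultimately show ?thesis unfolding colour_copy_def by blast
qed

end

context Hgraph begin

lemma ramsey_fin: "\<exists>N. bip_arrows N V E (Kv t) (Ke t)"
proof -
  define m where "m = max (card V) t"
  obtain N where N: "\<forall>c::nat\<Rightarrow>nat\<Rightarrow>bool. \<exists>col A B. A \<subseteq> {..<N} \<and> B \<subseteq> {..<N} \<and> card A = m \<and> card B = m \<and>
      (\<forall>a\<in>A. \<forall>b\<in>B. c a b = col)" using bip_ramsey_mono[of m] by (elim exE)
  have m1: "card V \<le> m" "t \<le> m" unfolding m_def by auto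
  have "bip_arrows N V E (Kv t) (Ke t)" unfolding bip_arrows_def
  proof
    fix c :: "nat \<Rightarrow> nat \<Rightarrow> bool"
    have "\<exists>col A B. A \<subseteq> {..<N} \<and> B \<subseteq> {..<N} \<and> card A = m \<and> card B = m \<and>
      (\<forall>a\<in>A. \<forall>b\<in>B. c a b = col)" using N by (rule allE)
    then obtain col A B where AB: "A \<subseteq> {..<N}" "B \<subseteq> {..<N}" "card A = m" "card B = m"
      "\<forall>a\<in>A. \<forall>b\<in>B. c a b = col" by blast
    show "colour_copy N c True V E \<or> colour_copy N c False (Kv t) (Ke t)"
    proof (cases col)
      case True
      hence "\<forall>a\<in>A. \<forall>b\<in>B. c a b = True" using AB(5) by simp
      hence "colour_copy N c True V E" by (rule embed_H[OF AB(1,3) AB(2,4) m1(1)])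
      thus ?thesis ..
    next
      case False
      hence "\<forall>a\<in>A. \<forall>b\<in>B. c a b = False" using AB(5) by simp
      hence "colour_copy N c False (Kv t) (Ke t)" by (rule embed_K[OF AB(1,3) AB(2,4) m1(2)])
      thus ?thesis ..
    qed
  qed
  thus ?thesis ..
qed

end

context Hgraph begin

lemma big_construction:
  fixes C0 :: nat
  shows "\<exists>t M c. t \<ge> 1 \<and> C0 * (t * t) \<le> M \<and> \<not> colour_copy M c True V E \<and>
     (\<forall>S T. S \<subseteq> {..<M} \<longrightarrow> T \<subseteq> {..<M} \<longrightarrow> card S = t \<longrightarrow> card T = t \<longrightarrow> (\<exists>a\<in>S. \<exists>b\<in>T. c a b))"
proof -
  define P where "P = card V - 2"
  define q where "q = card E"
  have P1: "P \<ge> 1" unfolding P_def using p3 by simp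
  have q2: "q \<ge> 2 * P + 2" unfolding q_def P_def using qbig p3 by simp
  define D where "D = 3 * P + 4"
  define L where "L = 4 * D + 3"
  define c1 where "c1 = 2 * (2 * D + 1) + 2 * D * q * L"
  define Z where "Z = q * 4 * 2 ^ P"
  define k where "k = max (max 2 (q * L)) (max (max (8 * (c1 + 1) ^ (c1 + 1)) (4 * (3 * Z) ^ L)) C0)"
  define t where "t = k ^ D"
  define M where "M = k ^ (2 * D + 1)"
  define s where "s = L * k ^ D"
  define \<rho> where "\<rho> = 1 / real (k ^ (D - 1))"
  have k: "k \<ge> 2" "k \<ge> q * L" "k \<ge> 8 * (c1 + 1) ^ (c1 + 1)" "k \<ge> 4 * (3 * Z) ^ L" "k \<ge> C0"
    unfolding k_def by auto
  note num = numeric[of P q k, folded D_def, folded L_def, folded c1_def, folded Z_def,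
      folded s_def, folded M_def, folded t_def, folded \<rho>_def, OF P1 q2 k(1-4)]
  have qs: "card E * s \<le> t * t" using num(1) unfolding q_def .
  have bound: "real ((M choose t) * (M choose t)) *
       (real (t * t choose (card E * s)) * (1 - \<rho>) ^ (t * t - card E * s)
        + real (t * t * card E * (4 * (2*M)^(card V - 2))) ^ s / fact s * \<rho> ^ (card E * s)) < 1"
    using num(4) unfolding q_def P_def .
  obtain col where col: "\<forall>S T. S \<subseteq> {..<M} \<longrightarrow> T \<subseteq> {..<M} \<longrightarrow> card S = t \<longrightarrow> card T = t \<longrightarrow>
     card E * s \<le> card {e \<in> S \<times> T. col e} \<and>
     \<not>(\<exists>F. F \<subseteq> {X\<in>Cop M. X \<inter> (S \<times> T) \<noteq> {}} \<and> card F = s \<and> disjoint F \<and> (\<forall>X\<in>F. \<forall>e\<in>X. col e))"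
    using exists_good[OF num(2) num(3) qs bound] by blast
  obtain c where c: "\<not> colour_copy M c True V E"
     "\<forall>S T. S \<subseteq> {..<M} \<longrightarrow> T \<subseteq> {..<M} \<longrightarrow> card S = t \<longrightarrow> card T = t \<longrightarrow> (\<exists>a\<in>S. \<exists>b\<in>T. c a b)"
    using alteration[where col=col and M=M and t=t and s=s] col by blast
  have t1: "t \<ge> 1" unfolding t_def using k(1) by simp
  have "M = k * (t * t)" unfolding M_def t_def by (simp add: power_add[symmetric] mult_2)
  hence "C0 * (t * t) \<le> M" using k(5) by simp
  thus ?thesis using t1 c by blast
qed

end

theorem mainTheorem2:
  fixes V :: "'a set" and E :: "'a set set"
  assumes "bipartite_graph V E"
    and "card V \<ge> 3"
    and "card E \<ge> 2 * card V - 2"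
  shows "\<not> bip_ramsey_size_linear V E"
proof
  assume "bip_ramsey_size_linear V E"
  then obtain C :: real where C: "\<forall>(V'::nat set) E'. bipartite_graph V' E' \<and> no_isolated V' E' \<longrightarrow>
        real (br V E V' E') \<le> C * real (card E')" unfolding bip_ramsey_size_linear_def by blast
  interpret Hgraph V E using assms by unfold_locales
  define C0 where "C0 = nat \<lceil>C\<rceil> + 1"
  have CC0: "C \<le> real C0" unfolding C0_def by linarith
  obtain t M c where tMc: "t \<ge> 1" "C0 * (t * t) \<le> M" "\<not> colour_copy M c True V E"
     "\<forall>S T. S \<subseteq> {..<M} \<longrightarrow> T \<subseteq> {..<M} \<longrightarrow> card S = t \<longrightarrow> card T = t \<longrightarrow> (\<exists>a\<in>S. \<exists>b\<in>T. c a b)"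
    using big_construction[of C0] by blast
  define Pn where "Pn = (\<lambda>N. bip_arrows N V E (Kv t) (Ke t))"
  have notM: "\<not> Pn M"
  proof
    assume "Pn M"
    hence "colour_copy M c True V E \<or> colour_copy M c False (Kv t) (Ke t)" unfolding Pn_def bip_arrows_def by blast
    hence "colour_copy M c False (Kv t) (Ke t)" using tMc(3) by blast
    then obtain S T where "S \<subseteq> {..<M}" "T \<subseteq> {..<M}" "card S = t" "card T = t" "\<forall>a\<in>S. \<forall>b\<in>T. \<not> c a b"
      using no_blue_box[OF _ tMc(1)] by blast
    thus False using tMc(4) by blast
  qed
  have exN: "\<exists>N. Pn N" unfolding Pn_def by (rule ramsey_fin)
  have brM: "br V E (Kv t) (Ke t) > M"
  proof (rule ccontr)
    assume "\<not> ?thesis"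
    hence le: "(LEAST N. Pn N) \<le> M" unfolding br_def Pn_def by simp
    have "Pn (LEAST N. Pn N)" using exN by (rule LeastI_ex)
    hence "Pn M" using le unfolding Pn_def by (rule bip_arrows_mono)
    thus False using notM by simp
  qed
  have "real (br V E (Kv t) (Ke t)) \<le> C * real (card (Ke t))"
    using C bip_Ke[of t] noiso_Ke[OF tMc(1)] by blast
  also have "\<dots> \<le> real C0 * real (t * t)"
  proof (cases "C \<le> 0")
    case True
    hence "C * real (card (Ke t)) \<le> 0" by (simp add: mult_nonpos_nonneg)
    also have "0 \<le> real C0 * real (t * t)" by simp
    finally show ?thesis .
  next
    case False
    have "real (card (Ke t)) \<le> real (t * t)" using card_Ke[of t] by (simp only: of_nat_le_iff)
    thus ?thesis using CC0 False by (intro mult_mono) auto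
  qed
  also have "\<dots> \<le> real M" using tMc(2) by (metis of_nat_le_iff of_nat_mult)
  finally show False using brM by simp
qed


end
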